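(* Let Assumptions 1 and 2 hold. For every $\eta>0$, every horizon $T\ge 1$ and every sequence of payoff vectors $u_1,\dots,u_T\in\mathbb{R}^N$ with $\|u_t\|_\infty\le u_{\max}$, the regret of the SSA with parameter $\eta$ satisfies $$R^T_{SSA}\le \eta\,\varphi_1(0)+\frac{L}{2\eta}\,T\,u_{\max}^2 ,$$ where $\varphi_1(0)=\mathbb{E}[\max_{i\in A}\epsilon_i]$. Moreover, if $\varphi_1(0)>0$ and $\eta=\sqrt{\frac{L T u_{\max}^2}{2\varphi_1(0)}}$, then $$R^T_{SSA}\le u_{\max}\sqrt{2\,\varphi_1(0)\,L\,T}.$$
   Context: Let $N\ge 2$, $A=\{1,\dots,N\}$, and $\Delta_N=\{x\in\mathbb{R}^N: x_i\ge 0,\ \sum_i x_i=1\}$. Let $\epsilon=(\epsilon_1,\dots,\epsilon_N)$ be a random vector satisfying Assumption 1: each $\epsilon_i$ is integrable with $\mathbb{E}[\epsilon_i]=0$, and the law of $\epsilon$ is absolutely continuous with respect to Lebesgue measure on $\mathbb{R}^N$ with support all of $\mathbb{R}^N$. For $\eta>0$ the social surplus function is $\varphi_\eta(\theta)=\mathbb{E}[\max_{j\in A}(\theta_j+\eta\epsilon_j)]$, $\theta\in\mathbb{R}^N$; thus $\varphi_\eta(\theta)=\eta\varphi_1(\theta/\eta)$. $\varphi_\eta$ is convex and differentiable with $\nabla\varphi_\eta(\theta)\in\Delta_N$. Assumption 2: $\varphi_1$ is twice continuously differentiable and there is a constant $L>0$ with $2\,\mathrm{tr}(\nabla^2\varphi_1(\theta))\le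 L$ for all $\theta\in\mathbb{R}^N$. Online decision problem: payoff vectors $u_1,\dots,u_T\in\mathbb{R}^N$ are arbitrary (possibly adversarial, possibly depending on past choices); set $\theta_0=0$ and $\theta_t=\sum_{s=1}^t u_s$. The regret of a sequence $x_1,\dots,x_T\in\Delta_N$ is $R^T=\max_{x\in\Delta_N}\langle\theta_T,x\rangle-\sum_{t=1}^T\langle u_t,x_t\rangle$. The Social Surplus Algorithm (SSA) with parameter $\eta$ chooses $x_t=\nabla\varphi_\eta(\theta_{t-1})$ for $t=1,\dots,T$; $R^T_{SSA}$ is its regret. *)

theory Defs
  imports "HOL-Probability.Probability"
begin

definition prob_simplex :: "(real^'n) set" where
  "prob_simplex = {x. (\<forall>i. 0 \<le> x $ i) \<and> (\<Sum>i\<in>UNIV. x $ i) = 1}"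

text \<open>Social surplus function phi_eta(theta) = E[max_j (theta_j + eta * eps_j)],
  where P is the law of the random vector eps.\<close>
definition surplus :: "(real^'n) measure \<Rightarrow> real \<Rightarrow> real^'n \<Rightarrow> real" where
  "surplus P \<eta> \<theta> = (\<integral>e. Max (range (\<lambda>j. \<theta> $ j + \<eta> * e $ j)) \<partial>P)"

definition cumpay :: "(nat \<Rightarrow> real^'n) \<Rightarrow> nat \<Rightarrow> real^'n" where
  "cumpay u t = (\<Sum>s=1..t. u s)"

definition regret :: "(nat \<Rightarrow> real^'n) \<Rightarrow> (nat \<Rightarrow> real^'n) \<Rightarrow> nat \<Rightarrow> real" where
  "regret u x T = (SUP y\<in>prob_simplex. cumpay u T \<bullet> y) - (\<Sum>t=1..T. u t \<bullet> x t)"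

definition assumption1 :: "(real^'n) measure \<Rightarrow> bool" where
  "assumption1 P \<longleftrightarrow> prob_space P \<and> sets P = sets borel \<and>
     (\<forall>i. integrable P (\<lambda>e. e $ i) \<and> (\<integral>e. e $ i \<partial>P) = 0) \<and>
     absolutely_continuous lborel P \<and>
     (\<forall>U. open U \<and> U \<noteq> {} \<longrightarrow> emeasure P U > 0)"

definition assumption2 :: "(real^'n) measure \<Rightarrow> real \<Rightarrow> bool" where
  "assumption2 P L \<longleftrightarrow> L > 0 \<and>
     (\<exists>g H. (\<forall>\<theta>. GDERIV (surplus P 1) \<theta> :> g \<theta>) \<and>
            (\<forall>\<theta>. (g has_derivative (\<lambda>h. H \<theta> *v h)) (at \<theta>)) \<and>
            continuous_on UNIV H \<and>
            (\<forall>\<theta>. 2 * trace (H \<theta>) \<le> L))"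

end

theory Submission imports Defs begin

lemma Max_range_ge: fixes f :: "'n::finite \<Rightarrow> real" shows "f j \<le> Max (range f)"
  by (simp add: Max_ge)

lemma Max_range_in: fixes f :: "'n::finite \<Rightarrow> real" shows "\<exists>k. Max (range f) = f k"
proof -
  have "Max (range f) \<in> range f" by (rule Max_in) auto
  then show ?thesis by (metis rangeE)
qed

lemma Max_range_abs: fixes f :: "'n::finite \<Rightarrow> real" shows "\<bar>Max (range f)\<bar> \<le> (\<Sum>j\<in>UNIV. \<bar>f j\<bar>)"
proof -
  obtain k where k: "Max (range f) = f k" using Max_range_in by blast
  have "\<bar>f k\<bar> \<le> (\<Sum>j\<in>UNIV. \<bar>f j\<bar>)"
    by (rule member_le_sum) auto
  then show ?thesis using k by simp
qed

lemma Max_range_add: fixes f :: "'n::finite \<Rightarrow> real" shows "Max (range (\<lambda>j. f j + t)) = Max (range f) + t"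
proof -
  have "(\<lambda>x. x + t) (Max (range f)) = Max ((\<lambda>x. x + t) ` range f)"
    by (rule mono_Max_commute) (auto simp: mono_def)
  then show ?thesis by (simp add: image_image)
qed

lemma Max_range_mult: fixes f :: "'n::finite \<Rightarrow> real" assumes "c > 0"
  shows "Max (range (\<lambda>j. c * f j)) = c * Max (range f)"
proof -
  have "(\<lambda>x. c * x) (Max (range f)) = Max ((\<lambda>x. c * x) ` range f)"
    by (rule mono_Max_commute) (use assms in \<open>auto simp: mono_def\<close>)
  then show ?thesis by (simp add: image_image)
qed

lemma a1_facts: assumes "assumption1 P"
  shows "prob_space P" "sets P = sets borel" "\<And>i. integrable P (\<lambda>e. e $ i)" "\<And>i. (\<integral>e. e $ i \<partial>P) = 0"
  using assms unfolding assumption1_def by auto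

lemma integrable_Max_surplus: assumes "assumption1 P"
  shows "integrable P (\<lambda>e. Max (range (\<lambda>j. \<theta> $ j + c * e $ j)))"
proof -
  note F = a1_facts[OF assms]
  interpret prob_space P by (rule F(1))
  have ij: "integrable P (\<lambda>e. \<theta> $ j + c * e $ j)" for j
    using F(3) by auto
  have "integrable P (\<lambda>e. \<Sum>j\<in>UNIV. \<bar>\<theta> $ j + c * e $ j\<bar>)"
    using ij by auto
  moreover have "(\<lambda>e. Max ((\<lambda>j. \<theta> $ j + c * e $ j) ` UNIV)) \<in> borel_measurable P"
    by (rule borel_measurable_Max) (use ij in auto)
  ultimately show ?thesis
    apply (rule Bochner_Integration.integrable_bound)
    apply (rule AE_I2)
    using Max_range_abs[of "\<lambda>j. \<theta> $ j + c * _ $ j"] by simp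
qed

lemma surplus_shift: assumes "assumption1 P"
  shows "surplus P c (\<theta> + (\<chi> i. t)) = surplus P c \<theta> + t"
proof -
  interpret prob_space P using a1_facts[OF assms] by auto
  have "surplus P c (\<theta> + (\<chi> i. t)) = (\<integral>e. Max (range (\<lambda>j. \<theta> $ j + c * e $ j)) + t \<partial>P)"
    unfolding surplus_def
  proof (rule Bochner_Integration.integral_cong)
    fix e :: "real^'a"
    have "(\<lambda>j. (\<theta> + (\<chi> i. t)) $ j + c * e $ j) = (\<lambda>j. (\<theta> $ j + c * e $ j) + t)" by auto
    then show "Max (range (\<lambda>j. (\<theta> + (\<chi> i. t)) $ j + c * e $ j)) = Max (range (\<lambda>j. \<theta> $ j + c * e $ j)) + t"
      by (simp only: Max_range_add)
  qed simp
  also have "\<dots> = surplus P c \<theta> + t"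
    unfolding surplus_def using integrable_Max_surplus[OF assms]
    by (subst Bochner_Integration.integral_add) (auto simp: prob_space)
  finally show ?thesis .
qed

lemma surplus_scale: assumes "c > 0"
  shows "surplus P c \<theta> = c * surplus P 1 ((1/c) *\<^sub>R \<theta>)"
proof -
  have "surplus P c \<theta> = (\<integral>e. c * Max (range (\<lambda>j. (1/c) * \<theta> $ j + 1 * e $ j)) \<partial>P)"
    unfolding surplus_def by (rule Bochner_Integration.integral_cong)
      (use assms in \<open>auto simp: Max_range_mult[symmetric] algebra_simps\<close>)
  also have "\<dots> = c * surplus P 1 ((1/c) *\<^sub>R \<theta>)"
    unfolding surplus_def by simp
  finally show ?thesis .
qed

lemma surplus_lower: assumes "assumption1 P"
  shows "\<theta> $ k \<le> surplus P c \<theta>"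
proof -
  note F = a1_facts[OF assms]
  interpret prob_space P by (rule F(1))
  have "\<theta> $ k = (\<integral>e. \<theta> $ k + c * e $ k \<partial>P)"
    using F(3,4) by (simp add: prob_space)
  also have "\<dots> \<le> surplus P c \<theta>"
    unfolding surplus_def
    by (rule integral_mono) (use F(3) integrable_Max_surplus[OF assms] in \<open>auto intro: Max_range_ge\<close>)
  finally show ?thesis .
qed


lemma Max_submod: fixes f :: "'n::finite \<Rightarrow> real"
  assumes "i \<noteq> j" "a \<ge> 0" "b \<ge> 0"
  shows "Max (range (\<lambda>k. f k + (if k = i then a else 0) + (if k = j then b else 0))) + Max (range f)
     \<le> Max (range (\<lambda>k. f k + (if k = i then a else 0))) + Max (range (\<lambda>k. f k + (if k = j then b else 0)))"
proof -
  obtain k where k: "Max (range (\<lambda>k. f k + (if k = i then a else 0) + (if k = j then b else 0)))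
     = f k + (if k = i then a else 0) + (if k = j then b else 0)" using Max_range_in by blast
  obtain m where m: "Max (range f) = f m" using Max_range_in by blast
  show ?thesis
  proof (cases "k = i")
    case True
    have "f k + a \<le> Max (range (\<lambda>k. f k + (if k = i then a else 0)))"
      using Max_range_ge[of "\<lambda>k. f k + (if k = i then a else 0)" k] True by simp
    moreover have "f m \<le> Max (range (\<lambda>k. f k + (if k = j then b else 0)))"
      by (rule order_trans[OF _ Max_range_ge[of _ m]]) (use assms in auto)
    ultimately show ?thesis using k m True assms by simp
  next
    case False
    have h1: "f k + (if k = j then b else 0) \<le> Max (range (\<lambda>k. f k + (if k = j then b else 0)))"
      using Max_range_ge[of "\<lambda>k. f k + (if k = j then b else 0)" k] by simp
    have h2: "f m \<le> Max (range (\<lambda>k. f k + (if k = i then a else 0)))"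
      by (rule order_trans[OF _ Max_range_ge[of _ m]]) (use assms in auto)
    have k': "Max (range (\<lambda>k. f k + (if k = i then a else 0) + (if k = j then b else 0))) = f k + (if k = j then b else 0)"
      using k False by simp
    show ?thesis using h1 h2 k' m by linarith
  qed
qed

lemma surplus_submod: assumes "assumption1 P" "i \<noteq> j" "a \<ge> 0" "b \<ge> 0"
  shows "surplus P c (\<theta> + axis i a + axis j b) + surplus P c \<theta>
     \<le> surplus P c (\<theta> + axis i a) + surplus P c (\<theta> + axis j b)"
proof -
  note I = integrable_Max_surplus[OF assms(1)]
  have "surplus P c (\<theta> + axis i a + axis j b) + surplus P c \<theta>
     = (\<integral>e. Max (range (\<lambda>k. (\<theta> + axis i a + axis j b) $ k + c * e $ k)) + Max (range (\<lambda>k. \<theta> $ k + c * e $ k)) \<partial>P)"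
    unfolding surplus_def by (rule Bochner_Integration.integral_add[symmetric, OF I I])
  also have "\<dots> \<le> (\<integral>e. Max (range (\<lambda>k. (\<theta> + axis i a) $ k + c * e $ k)) + Max (range (\<lambda>k. (\<theta> + axis j b) $ k + c * e $ k)) \<partial>P)"
  proof (rule integral_mono)
    fix e :: "real^'a"
    have eq1: "(\<lambda>k. (\<theta> + axis i a + axis j b) $ k + c * e $ k) = (\<lambda>k. (\<theta> $ k + c * e $ k) + (if k = i then a else 0) + (if k = j then b else 0))"
      by (auto simp: axis_def)
    have eq2: "(\<lambda>k. (\<theta> + axis i a) $ k + c * e $ k) = (\<lambda>k. (\<theta> $ k + c * e $ k) + (if k = i then a else 0))"
      by (auto simp: axis_def)
    have eq3: "(\<lambda>k. (\<theta> + axis j b) $ k + c * e $ k) = (\<lambda>k. (\<theta> $ k + c * e $ k) + (if k = j then b else 0))"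
      by (auto simp: axis_def)
    show "Max (range (\<lambda>k. (\<theta> + axis i a + axis j b) $ k + c * e $ k)) + Max (range (\<lambda>k. \<theta> $ k + c * e $ k))
      \<le> Max (range (\<lambda>k. (\<theta> + axis i a) $ k + c * e $ k)) + Max (range (\<lambda>k. (\<theta> + axis j b) $ k + c * e $ k))"
      unfolding eq1 eq2 eq3 by (rule Max_submod[OF assms(2-4)])
  qed (rule Bochner_Integration.integrable_add[OF I I])+
  also have "\<dots> = surplus P c (\<theta> + axis i a) + surplus P c (\<theta> + axis j b)"
    unfolding surplus_def by (rule Bochner_Integration.integral_add[OF I I])
  finally show ?thesis .
qed


lemma line_deriv:
  fixes \<phi> :: "real^'n \<Rightarrow> real"
  assumes "\<And>y. (\<phi> has_derivative (\<lambda>h. h \<bullet> g y)) (at y)"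
  shows "((\<lambda>s. \<phi> (\<theta> + s *\<^sub>R v)) has_real_derivative (v \<bullet> g (\<theta> + s0 *\<^sub>R v))) (at s0)"
proof -
  have l: "((\<lambda>s. \<theta> + s *\<^sub>R v) has_derivative (\<lambda>s. s *\<^sub>R v)) (at s0)"
    by (auto intro!: derivative_eq_intros)
  have "((\<lambda>s. \<phi> (\<theta> + s *\<^sub>R v)) has_derivative (\<lambda>s. (s *\<^sub>R v) \<bullet> g (\<theta> + s0 *\<^sub>R v))) (at s0)"
    using has_derivative_compose[OF l assms] by simp
  then show ?thesis
    by (rule has_derivative_imp_has_field_derivative) simp
qed

lemma line_deriv_vec:
  fixes g :: "real^'n \<Rightarrow> real^'n"
  assumes "\<And>y. (g has_derivative (\<lambda>h. H y *v h)) (at y)"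
  shows "((\<lambda>s. g (\<theta> + s *\<^sub>R v) \<bullet> w) has_real_derivative ((H (\<theta> + s0 *\<^sub>R v) *v v) \<bullet> w)) (at s0)"
proof -
  have l: "((\<lambda>s. \<theta> + s *\<^sub>R v) has_derivative (\<lambda>s. s *\<^sub>R v)) (at s0)"
    by (auto intro!: derivative_eq_intros)
  have "((\<lambda>s. g (\<theta> + s *\<^sub>R v)) has_derivative (\<lambda>s. H (\<theta> + s0 *\<^sub>R v) *v (s *\<^sub>R v))) (at s0)"
    using has_derivative_compose[OF l assms] by simp
  then have "((\<lambda>s. g (\<theta> + s *\<^sub>R v) \<bullet> w) has_derivative (\<lambda>s. (H (\<theta> + s0 *\<^sub>R v) *v (s *\<^sub>R v)) \<bullet> w)) (at s0)"
    by (rule has_derivative_inner_left)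
  then show ?thesis
    by (rule has_derivative_imp_has_field_derivative) (simp add: matrix_vector_mult_scaleR)
qed


lemma mv_axis: "((H::real^'n^'n) *v axis j 1) $ i = H $ i $ j"
  by (simp add: matrix_vector_mult_def axis_def if_distrib cong: if_cong)

lemma inner_ones: "(\<chi> i. 1) \<bullet> (v::real^'n) = (\<Sum>i\<in>UNIV. v $ i)"
  by (simp add: inner_vec_def)

lemma grad_sum:
  fixes \<phi> :: "real^'n \<Rightarrow> real"
  assumes dphi: "\<And>y. (\<phi> has_derivative (\<lambda>h. h \<bullet> g y)) (at y)"
    and shift: "\<And>\<theta> t. \<phi> (\<theta> + (\<chi> i. t)) = \<phi> \<theta> + t"
  shows "(\<chi> i. 1) \<bullet> g \<theta> = 1"
proof -
  have d1: "((\<lambda>s. \<phi> (\<theta> + s *\<^sub>R (\<chi> i. 1))) has_real_derivative ((\<chi> i. 1) \<bullet> g \<theta>)) (at 0)"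
    using line_deriv[OF dphi, of \<theta> "\<chi> i. 1" 0] by simp
  have eq: "(\<lambda>s. \<phi> (\<theta> + s *\<^sub>R (\<chi> i. 1))) = (\<lambda>s. \<phi> \<theta> + s)"
  proof
    fix s :: real
    have e: "s *\<^sub>R (\<chi> i. 1) = (\<chi> i. s)" by (simp add: vec_eq_iff)
    show "\<phi> (\<theta> + s *\<^sub>R (\<chi> i. 1)) = \<phi> \<theta> + s" unfolding e by (rule shift)
  qed
  have d2: "((\<lambda>s. \<phi> \<theta> + s) has_real_derivative 1) (at 0)"
    by (auto intro!: derivative_eq_intros)
  show ?thesis using DERIV_unique[OF d1[unfolded eq] d2] .
qed

lemma H_colsum:
  fixes \<phi> :: "real^'n \<Rightarrow> real"
  assumes dphi: "\<And>y. (\<phi> has_derivative (\<lambda>h. h \<bullet> g y)) (at y)"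
    and dg: "\<And>y. (g has_derivative (\<lambda>h. H y *v h)) (at y)"
    and shift: "\<And>\<theta> t. \<phi> (\<theta> + (\<chi> i. t)) = \<phi> \<theta> + t"
  shows "(\<Sum>i\<in>UNIV. H \<theta> $ i $ j) = 0"
proof -
  have d1: "((\<lambda>s. g (\<theta> + s *\<^sub>R axis j 1) \<bullet> (\<chi> i. 1)) has_real_derivative ((H \<theta> *v axis j 1) \<bullet> (\<chi> i. 1))) (at 0)"
    using line_deriv_vec[OF dg, of \<theta> "axis j 1" "\<chi> i. 1" 0] by simp
  have eq: "(\<lambda>s. g (\<theta> + s *\<^sub>R axis j 1) \<bullet> (\<chi> i. 1)) = (\<lambda>s. 1)"
    by (rule ext) (metis grad_sum[OF dphi shift] inner_commute)
  have d2: "((\<lambda>s. 1::real) has_real_derivative 0) (at 0)"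
    by (auto intro!: derivative_eq_intros)
  have "(H \<theta> *v axis j 1) \<bullet> (\<chi> i. 1) = 0" using DERIV_unique[OF d1[unfolded eq] d2] .
  then show ?thesis by (simp add: inner_commute inner_ones mv_axis)
qed

lemma grad_mono:
  fixes \<phi> :: "real^'n \<Rightarrow> real"
  assumes dphi: "\<And>y. (\<phi> has_derivative (\<lambda>h. h \<bullet> g y)) (at y)"
    and submod: "\<And>\<theta> i j a b. i \<noteq> j \<Longrightarrow> a \<ge> 0 \<Longrightarrow> b \<ge> 0 \<Longrightarrow>
        \<phi> (\<theta> + axis i a + axis j b) + \<phi> \<theta> \<le> \<phi> (\<theta> + axis i a) + \<phi> (\<theta> + axis j b)"
    and ij: "i \<noteq> j" and b: "b \<ge> 0"
  shows "g (\<theta> + axis j b) $ i \<le> g \<theta> $ i"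
proof (rule ccontr)
  assume neg: "\<not> ?thesis"
  define K where "K = (\<lambda>a. (\<phi> ((\<theta> + axis j b) + a *\<^sub>R axis i 1) - \<phi> (\<theta> + axis j b)) - (\<phi> (\<theta> + a *\<^sub>R axis i 1) - \<phi> \<theta>))"
  have d1: "((\<lambda>a. \<phi> ((\<theta> + axis j b) + a *\<^sub>R axis i 1)) has_real_derivative (axis i 1 \<bullet> g (\<theta> + axis j b))) (at 0)"
    using line_deriv[OF dphi, of "\<theta> + axis j b" "axis i 1" 0] by simp
  have d2: "((\<lambda>a. \<phi> (\<theta> + a *\<^sub>R axis i 1)) has_real_derivative (axis i 1 \<bullet> g \<theta>)) (at 0)"
    using line_deriv[OF dphi, of "\<theta>" "axis i 1" 0] by simp
  have dK: "(K has_real_derivative (g (\<theta> + axis j b) $ i - g \<theta> $ i)) (at 0)"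
    unfolding K_def using DERIV_diff[OF DERIV_diff[OF d1 DERIV_const] DERIV_diff[OF d2 DERIV_const]]
    by (simp add: inner_axis')
  obtain d where "d > 0" and d: "\<And>h. h > 0 \<Longrightarrow> h < d \<Longrightarrow> K 0 < K (0 + h)"
    using DERIV_pos_inc_right[OF dK] neg by auto
  have "K 0 < K (d/2)" using d[of "d/2"] \<open>d > 0\<close> by simp
  moreover have "K 0 = 0" by (simp add: K_def)
  moreover have "K (d/2) \<le> 0"
  proof -
    have ax: "(d/2) *\<^sub>R axis i (1::real) = axis i (d/2)" by (simp add: vec_eq_iff axis_def)
    have h: "\<phi> (\<theta> + axis i (d/2) + axis j b) + \<phi> \<theta> \<le> \<phi> (\<theta> + axis i (d/2)) + \<phi> (\<theta> + axis j b)"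
      using submod[OF ij, of "d/2" b \<theta>] \<open>d > 0\<close> b by simp
    have e: "\<theta> + axis j b + axis i (d/2) = \<theta> + axis i (d/2) + axis j b" by (simp add: algebra_simps)
    show ?thesis unfolding K_def ax e using h by linarith
  qed
  ultimately show False by simp
qed

lemma H_offdiag:
  fixes \<phi> :: "real^'n \<Rightarrow> real"
  assumes dphi: "\<And>y. (\<phi> has_derivative (\<lambda>h. h \<bullet> g y)) (at y)"
    and dg: "\<And>y. (g has_derivative (\<lambda>h. H y *v h)) (at y)"
    and submod: "\<And>\<theta> i j a b. i \<noteq> j \<Longrightarrow> a \<ge> 0 \<Longrightarrow> b \<ge> 0 \<Longrightarrow>
        \<phi> (\<theta> + axis i a + axis j b) + \<phi> \<theta> \<le> \<phi> (\<theta> + axis i a) + \<phi> (\<theta> + axis j b)"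
    and ij: "i \<noteq> j"
  shows "H \<theta> $ i $ j \<le> 0"
proof (rule ccontr)
  assume neg: "\<not> ?thesis"
  define M where "M = (\<lambda>b. g (\<theta> + b *\<^sub>R axis j 1) \<bullet> axis i 1)"
  have dM: "(M has_real_derivative (H \<theta> $ i $ j)) (at 0)"
    using line_deriv_vec[OF dg, of \<theta> "axis j 1" "axis i 1" 0] unfolding M_def by (simp add: inner_axis mv_axis)
  obtain d where "d > 0" and d: "\<And>h. h > 0 \<Longrightarrow> h < d \<Longrightarrow> M 0 < M (0 + h)"
    using DERIV_pos_inc_right[OF dM] neg by auto
  have "M 0 < M (d/2)" using d[of "d/2"] \<open>d > 0\<close> by simp
  moreover have "M (d/2) \<le> M 0"
  proof -
    have ax: "(d/2) *\<^sub>R axis j (1::real) = axis j (d/2)" by (simp add: vec_eq_iff axis_def)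
    show ?thesis unfolding M_def ax using grad_mono[OF dphi submod ij, of "d/2" \<theta>] \<open>d > 0\<close>
      by (simp add: inner_axis)
  qed
  ultimately show False by simp
qed


lemma quad_bound:
  fixes A :: "real^'n^'n" and v :: "real^'n"
  assumes cs: "\<And>j. (\<Sum>i\<in>UNIV. A $ i $ j) = 0"
    and off: "\<And>i j. i \<noteq> j \<Longrightarrow> A $ i $ j \<le> 0"
    and bd: "\<And>i. \<bar>v $ i\<bar> \<le> m"
  shows "v \<bullet> (A *v v) \<le> 2 * m\<^sup>2 * trace A"
proof -
  have 1: "v \<bullet> (A *v v) = (\<Sum>i\<in>UNIV. \<Sum>j\<in>UNIV. A$i$j * v$i * v$j)"
    by (simp add: inner_vec_def matrix_vector_mult_def sum_distrib_left mult_ac)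
  have 2: "(\<Sum>i\<in>UNIV. \<Sum>j\<in>UNIV. A$i$j * v$j * v$j) = 0"
  proof -
    have "(\<Sum>i\<in>UNIV. \<Sum>j\<in>UNIV. A$i$j * v$j * v$j) = (\<Sum>j\<in>UNIV. (\<Sum>i\<in>UNIV. A$i$j) * (v$j * v$j))"
      by (subst sum.swap) (simp add: sum_distrib_right sum_distrib_left mult_ac)
    also have "\<dots> = 0" using cs by simp
    finally show ?thesis .
  qed
  have 3: "(\<Sum>i\<in>UNIV. \<Sum>j\<in>UNIV. A$i$j) = 0"
    by (subst sum.swap) (simp add: cs)
  have m0: "m \<ge> 0" using bd[of undefined] by simp
  have 4: "A$i$j * v$i * v$j - A$i$j * v$j * v$j \<le> -2 * m\<^sup>2 * A$i$j + (if i = j then 2 * m\<^sup>2 * A$j$j else 0)" for i j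
  proof (cases "i = j")
    case True then show ?thesis by simp
  next
    case False
    have a: "\<bar>v$j * v$i\<bar> \<le> m * m" unfolding abs_mult by (rule mult_mono[OF bd bd]) (use m0 in auto)
    have b: "\<bar>v$j * v$j\<bar> \<le> m * m" unfolding abs_mult by (rule mult_mono[OF bd bd]) (use m0 in auto)
    have w: "-2 * m\<^sup>2 \<le> v$j * v$i - v$j * v$j" using a b by (simp add: power2_eq_square abs_le_iff)
    have "A$i$j * (-2 * m\<^sup>2) \<ge> A$i$j * (v$j * v$i - v$j * v$j)"
      by (rule mult_left_mono_neg[OF w off[OF False]])
    then show ?thesis using False by (simp add: algebra_simps)
  qed
  have "v \<bullet> (A *v v) = (\<Sum>i\<in>UNIV. \<Sum>j\<in>UNIV. A$i$j * v$i * v$j - A$i$j * v$j * v$j)"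
    using 1 2 by (simp add: sum_subtractf)
  also have "\<dots> \<le> (\<Sum>i\<in>UNIV. \<Sum>j\<in>UNIV. -2 * m\<^sup>2 * A$i$j + (if i = j then 2 * m\<^sup>2 * A$j$j else 0))"
    by (intro sum_mono 4)
  also have "\<dots> = -2 * m\<^sup>2 * (\<Sum>i\<in>UNIV. \<Sum>j\<in>UNIV. A$i$j) + 2 * m\<^sup>2 * trace A"
    by (simp add: sum.distrib sum_subtractf sum_distrib_left trace_def sum.delta sum.delta' sum_negf)
  also have "\<dots> = 2 * m\<^sup>2 * trace A" using 3 by simp
  finally show ?thesis .
qed

lemma taylor_bound:
  fixes \<phi> :: "real^'n \<Rightarrow> real"
  assumes dphi: "\<And>y. (\<phi> has_derivative (\<lambda>h. h \<bullet> g y)) (at y)"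
    and dg: "\<And>y. (g has_derivative (\<lambda>h. H y *v h)) (at y)"
    and hess: "\<And>y. v \<bullet> (H y *v v) \<le> M"
  shows "\<phi> (\<theta> + v) - \<phi> \<theta> - v \<bullet> g \<theta> \<le> M / 2"
proof -
  have dp: "((\<lambda>s. g (\<theta> + s *\<^sub>R v) \<bullet> v - M * s) has_real_derivative ((H (\<theta> + s *\<^sub>R v) *v v) \<bullet> v - M)) (at s)" for s
    using DERIV_diff[OF line_deriv_vec[OF dg, of \<theta> v v s] DERIV_cmult[OF DERIV_ident, of M]] by simp
  have p: "g (\<theta> + s *\<^sub>R v) \<bullet> v - M * s \<le> g \<theta> \<bullet> v" if "s \<ge> 0" for s
  proof -
    have "(\<lambda>s. g (\<theta> + s *\<^sub>R v) \<bullet> v - M * s) s \<le> (\<lambda>s. g (\<theta> + s *\<^sub>R v) \<bullet> v - M * s) 0"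
    proof (rule DERIV_nonpos_imp_nonincreasing[OF that])
      fix x
      show "\<exists>y. ((\<lambda>s. g (\<theta> + s *\<^sub>R v) \<bullet> v - M * s) has_real_derivative y) (at x) \<and> y \<le> 0"
        using dp[of x] hess[of "\<theta> + x *\<^sub>R v"]
        by (intro exI[of _ "(H (\<theta> + x *\<^sub>R v) *v v) \<bullet> v - M"]) (simp add: inner_commute)
    qed
    then show ?thesis by simp
  qed
  define k where "k = (\<lambda>s. \<phi> (\<theta> + s *\<^sub>R v) - s * (v \<bullet> g \<theta>) - M / 2 * s\<^sup>2)"
  have dk: "(k has_real_derivative (v \<bullet> g (\<theta> + s *\<^sub>R v) - v \<bullet> g \<theta> - M * s)) (at s)" for s
  proof -
    have d2: "((\<lambda>s. s * (v \<bullet> g \<theta>)) has_real_derivative (v \<bullet> g \<theta>)) (at s)"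
      by (auto intro!: derivative_eq_intros)
    have d3: "((\<lambda>s. M / 2 * s\<^sup>2) has_real_derivative (M * s)) (at s)"
      by (auto intro!: derivative_eq_intros)
    show ?thesis unfolding k_def by (rule DERIV_diff[OF DERIV_diff[OF line_deriv[OF dphi] d2] d3])
  qed
  have "k 1 \<le> k 0"
  proof (rule DERIV_nonpos_imp_nonincreasing[of 0 1 k])
    fix x :: real assume "0 \<le> x" "x \<le> 1"
    then show "\<exists>y. (k has_real_derivative y) (at x) \<and> y \<le> 0"
      using dk[of x] p[of x] by (intro exI[of _ "v \<bullet> g (\<theta> + x *\<^sub>R v) - v \<bullet> g \<theta> - M * x"]) (simp add: inner_commute)
  qed simp
  then show ?thesis unfolding k_def by simp
qed


lemma step_bound:
  fixes P :: "(real^'n) measure"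
  assumes a1: "assumption1 P"
    and dphi: "\<And>y. (surplus P 1 has_derivative (\<lambda>h. h \<bullet> g y)) (at y)"
    and dg: "\<And>y. (g has_derivative (\<lambda>h. H y *v h)) (at y)"
    and tr: "\<And>y. 2 * trace (H y) \<le> L"
    and eta: "\<eta> > 0"
    and bd: "\<And>i. \<bar>v $ i\<bar> \<le> umax"
    and gx: "GDERIV (surplus P \<eta>) \<theta> :> x"
  shows "surplus P \<eta> (\<theta> + v) - surplus P \<eta> \<theta> - v \<bullet> x \<le> L * umax\<^sup>2 / (2 * \<eta>)"
proof -
  let ?\<phi> = "surplus P 1"
  have shift: "\<And>\<theta> t. ?\<phi> (\<theta> + (\<chi> i. t)) = ?\<phi> \<theta> + t" using surplus_shift[OF a1] .
  have submod: "\<And>\<theta> i j a b. i \<noteq> j \<Longrightarrow> a \<ge> 0 \<Longrightarrow> b \<ge> 0 \<Longrightarrow>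
        ?\<phi> (\<theta> + axis i a + axis j b) + ?\<phi> \<theta> \<le> ?\<phi> (\<theta> + axis i a) + ?\<phi> (\<theta> + axis j b)"
    using surplus_submod[OF a1] by blast
  have cs: "\<And>y j. (\<Sum>i\<in>UNIV. H y $ i $ j) = 0" using H_colsum[OF dphi dg shift] .
  have off: "\<And>y i j. i \<noteq> j \<Longrightarrow> H y $ i $ j \<le> 0" using H_offdiag[OF dphi dg submod] by blast
  define \<theta>' where "\<theta>' = (1/\<eta>) *\<^sub>R \<theta>"
  define v' where "v' = (1/\<eta>) *\<^sub>R v"
  have seq: "surplus P \<eta> = (\<lambda>y. \<eta> * ?\<phi> ((1/\<eta>) *\<^sub>R y))"
    using surplus_scale[OF eta] by blast
  have d1: "(surplus P \<eta> has_derivative (\<lambda>h. h \<bullet> x)) (at \<theta>)" using gx unfolding gderiv_def .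
  have d2: "(surplus P \<eta> has_derivative (\<lambda>h. h \<bullet> g \<theta>')) (at \<theta>)"
  proof -
    have l: "((\<lambda>y. (1/\<eta>) *\<^sub>R y) has_derivative (\<lambda>h. (1/\<eta>) *\<^sub>R h)) (at \<theta>)"
      by (auto intro!: derivative_eq_intros)
    have "((\<lambda>y. ?\<phi> ((1/\<eta>) *\<^sub>R y)) has_derivative (\<lambda>h. ((1/\<eta>) *\<^sub>R h) \<bullet> g \<theta>')) (at \<theta>)"
      using has_derivative_compose[OF l dphi] unfolding \<theta>'_def .
    then have "((\<lambda>y. \<eta> * ?\<phi> ((1/\<eta>) *\<^sub>R y)) has_derivative (\<lambda>h. \<eta> * (((1/\<eta>) *\<^sub>R h) \<bullet> g \<theta>'))) (at \<theta>)"
      by (rule has_derivative_mult_right)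
    moreover have "(\<lambda>h. \<eta> * (((1/\<eta>) *\<^sub>R h) \<bullet> g \<theta>')) = (\<lambda>h. h \<bullet> g \<theta>')"
      using eta by auto
    ultimately show ?thesis unfolding seq by simp
  qed
  have xg: "x = g \<theta>'"
  proof -
    have "(\<lambda>h. h \<bullet> x) = (\<lambda>h. h \<bullet> g \<theta>')" using has_derivative_unique[OF d1 d2] .
    then have "\<And>i. axis i 1 \<bullet> x = axis i 1 \<bullet> g \<theta>'" by metis
    then show ?thesis by (simp add: vec_eq_iff inner_axis')
  qed
  have bd': "\<bar>v' $ i\<bar> \<le> umax / \<eta>" for i
    using bd[of i] eta by (simp add: v'_def abs_mult divide_simps)
  have hess: "v' \<bullet> (H y *v v') \<le> L * (umax / \<eta>)\<^sup>2" for y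
  proof -
    have "v' \<bullet> (H y *v v') \<le> 2 * (umax / \<eta>)\<^sup>2 * trace (H y)"
      by (rule quad_bound[OF cs off bd'])
    also have "\<dots> = (2 * trace (H y)) * (umax / \<eta>)\<^sup>2" by simp
    also have "\<dots> \<le> L * (umax / \<eta>)\<^sup>2" using tr[of y]
      by (rule mult_right_mono) simp
    finally show ?thesis .
  qed
  have tb: "?\<phi> (\<theta>' + v') - ?\<phi> \<theta>' - v' \<bullet> g \<theta>' \<le> L * (umax / \<eta>)\<^sup>2 / 2"
    by (rule taylor_bound[OF dphi dg hess])
  have "surplus P \<eta> (\<theta> + v) - surplus P \<eta> \<theta> - v \<bullet> x = \<eta> * (?\<phi> (\<theta>' + v') - ?\<phi> \<theta>' - v' \<bullet> g \<theta>')"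
    unfolding seq xg \<theta>'_def v'_def using eta by (simp add: scaleR_add_right algebra_simps)
  also have "\<dots> \<le> \<eta> * (L * (umax / \<eta>)\<^sup>2 / 2)"
    using tb eta by (simp add: mult_left_mono)
  also have "\<dots> = L * umax\<^sup>2 / (2 * \<eta>)"
    using eta by (simp add: power2_eq_square field_simps)
  finally show ?thesis .
qed


lemma tele: fixes T :: nat shows "(\<Sum>t=1..T. f t - f (t - 1)) = f T - (f 0 :: real)"
  by (induction T) (auto simp: sum.cl_ivl_Suc)

lemma cumpay_Suc: "cumpay u (Suc k) = cumpay u k + u (Suc k)"
  by (simp add: cumpay_def sum.cl_ivl_Suc)

lemma cumpay_0: "cumpay u 0 = 0"
  by (simp add: cumpay_def)

lemma simplex_sup:
  fixes P :: "(real^'n) measure"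
  assumes a1: "assumption1 P"
  shows "(SUP y\<in>prob_simplex. \<theta> \<bullet> y) \<le> surplus P c \<theta>"
proof (rule cSUP_least)
  show "prob_simplex \<noteq> ({} :: (real^'n) set)"
  proof -
    have "axis undefined 1 \<in> (prob_simplex :: (real^'n) set)"
      by (simp add: prob_simplex_def axis_def)
    then show ?thesis by blast
  qed
next
  fix y :: "real^'n" assume "y \<in> prob_simplex"
  then have y0: "\<And>i. 0 \<le> y $ i" and y1: "(\<Sum>i\<in>UNIV. y $ i) = 1" by (auto simp: prob_simplex_def)
  have "\<theta> \<bullet> y = (\<Sum>i\<in>UNIV. \<theta> $ i * y $ i)" by (simp add: inner_vec_def)
  also have "\<dots> \<le> (\<Sum>i\<in>UNIV. surplus P c \<theta> * y $ i)"
    by (intro sum_mono mult_right_mono surplus_lower[OF a1] y0)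
  also have "\<dots> = surplus P c \<theta>" using y1 by (simp add: sum_distrib_left[symmetric])
  finally show "\<theta> \<bullet> y \<le> surplus P c \<theta>" .
qed

theorem theorem1:
  fixes P :: "(real^'n) measure" and L \<eta> umax :: real and T :: nat
    and u x :: "nat \<Rightarrow> real^'n"
  assumes "CARD('n) \<ge> 2"
    and "assumption1 P"
    and "assumption2 P L"
    and "\<eta> > 0"
    and "T \<ge> 1"
    and "\<forall>t\<in>{1..T}. \<forall>i. \<bar>u t $ i\<bar> \<le> umax"
    and "\<forall>t\<in>{1..T}. GDERIV (surplus P \<eta>) (cumpay u (t - 1)) :> x t"
  shows "regret u x T \<le> \<eta> * surplus P 1 0 + L / (2 * \<eta>) * real T * umax\<^sup>2
    \<and> (surplus P 1 0 > 0 \<and> \<eta> = sqrt (L * real T * umax\<^sup>2 / (2 * surplus P 1 0))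
        \<longrightarrow> regret u x T \<le> umax * sqrt (2 * surplus P 1 0 * L * real T))"
proof -
  note a1 = assms(2) and eta = assms(4)
  obtain g H where L0: "L > 0" and dphi0: "\<And>y. GDERIV (surplus P 1) y :> g y"
    and dg: "\<And>y. (g has_derivative (\<lambda>h. H y *v h)) (at y)"
    and tr: "\<And>y. 2 * trace (H y) \<le> L"
    using assms(3) unfolding assumption2_def by blast
  have dphi: "\<And>y. (surplus P 1 has_derivative (\<lambda>h. h \<bullet> g y)) (at y)"
    using dphi0 unfolding gderiv_def .
  have um0: "umax \<ge> 0" using assms(5,6) by (meson abs_ge_zero atLeastAtMost_iff order_trans order_refl)
  let ?\<phi> = "surplus P \<eta>"
  define c where "c = L * umax\<^sup>2 / (2 * \<eta>)"
  have step: "?\<phi> (cumpay u t) - ?\<phi> (cumpay u (t - 1)) \<le> u t \<bullet> x t + c" if t: "t \<in> {1..T}" for t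
  proof -
    obtain k where k: "t = Suc k" using t by (cases t) auto
    have "?\<phi> (cumpay u (t-1) + u t) - ?\<phi> (cumpay u (t-1)) - u t \<bullet> x t \<le> c"
      unfolding c_def
      by (rule step_bound[OF a1 dphi dg tr eta]) (use assms(6,7) t in auto)
    then show ?thesis using k by (simp add: cumpay_Suc)
  qed
  have "(SUP y\<in>prob_simplex. cumpay u T \<bullet> y) \<le> ?\<phi> (cumpay u T)"
    by (rule simplex_sup[OF a1])
  also have "\<dots> = ?\<phi> (cumpay u 0) + (\<Sum>t=1..T. ?\<phi> (cumpay u t) - ?\<phi> (cumpay u (t - 1)))"
    using tele[of "\<lambda>t. ?\<phi> (cumpay u t)" T] by simp
  also have "\<dots> \<le> ?\<phi> (cumpay u 0) + (\<Sum>t=1..T. u t \<bullet> x t + c)"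
    using step by (intro add_left_mono sum_mono) auto
  also have "\<dots> = \<eta> * surplus P 1 0 + (\<Sum>t=1..T. u t \<bullet> x t) + real T * c"
    using surplus_scale[OF eta, of P 0] by (simp add: cumpay_0 sum.distrib)
  finally have fin: "(SUP y\<in>prob_simplex. cumpay u T \<bullet> y) \<le> \<eta> * surplus P 1 0 + (\<Sum>t=1..T. u t \<bullet> x t) + real T * c" .
  have main: "regret u x T \<le> \<eta> * surplus P 1 0 + L / (2 * \<eta>) * real T * umax\<^sup>2"
  proof -
    have "real T * (L * umax\<^sup>2 / (2 * \<eta>)) = L / (2 * \<eta>) * real T * umax\<^sup>2" by simp
    then show ?thesis using fin unfolding regret_def c_def by linarith
  qed
  moreover have "regret u x T \<le> umax * sqrt (2 * surplus P 1 0 * L * real T)"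
    if h: "surplus P 1 0 > 0" "\<eta> = sqrt (L * real T * umax\<^sup>2 / (2 * surplus P 1 0))"
  proof -
    define a where "a = surplus P 1 0"
    define B where "B = L * real T * umax\<^sup>2"
    have a0: "a > 0" using h by (simp add: a_def)
    have B0: "B \<ge> 0" using L0 by (simp add: B_def)
    have e2: "\<eta>\<^sup>2 = B / (2 * a)" using h a0 B0 by (simp add: a_def B_def)
    have Beq: "B = 2 * a * \<eta>\<^sup>2" using e2 a0 by (simp add: field_simps)
    have "\<eta> * a + L / (2 * \<eta>) * real T * umax\<^sup>2 = \<eta> * a + B / (2 * \<eta>)"
      by (simp add: B_def)
    also have "\<dots> = 2 * a * \<eta>" using eta unfolding Beq by (simp add: power2_eq_square field_simps)
    also have "\<dots> = umax * sqrt (2 * a * L * real T)"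
    proof (rule power2_eq_imp_eq)
      have "(umax * sqrt (2 * a * L * real T))\<^sup>2 = umax\<^sup>2 * (2 * a * L * real T)"
        using a0 L0 by (simp add: power_mult_distrib)
      also have "\<dots> = 2 * a * B" by (simp add: B_def)
      also have "\<dots> = (2 * a * \<eta>)\<^sup>2" unfolding Beq by (simp add: power2_eq_square)
      finally show "(2 * a * \<eta>)\<^sup>2 = (umax * sqrt (2 * a * L * real T))\<^sup>2" by simp
      show "0 \<le> 2 * a * \<eta>" using a0 eta by simp
      show "0 \<le> umax * sqrt (2 * a * L * real T)" using um0 a0 L0 by simp
    qed
    finally show ?thesis using main by (simp add: a_def mult.commute)
  qed
  ultimately show ?thesis by blast
qed

end
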